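(* Let $\mathcal{G}=(\mathcal{V},\mathcal{E})$ be an unweighted finite simple graph and $f:\mathcal{V}\to\mathbb{R}$ a filtering function. Let $u\in\mathcal{V}$ be dominated by $v\in\mathcal{V}$, and suppose $f(u)\geq f(v)$. Then for every $k\geq 0$, $$PD_k(\mathcal{G},f)=PD_k(\mathcal{G}-\{u\},f),$$ where on the right $f$ is restricted to $\mathcal{V}\setminus\{u\}$ and the same threshold set is used.
   Context: For a vertex $w$, $N(w)=\{w\}\cup\{x: \{w,x\}\in\mathcal{E}\}$ is its closed neighborhood; $u$ is dominated by $v\neq u$ if $N(u)\subset N(v)$. $\mathcal{G}-\{u\}$ is obtained by deleting $u$ and all its incident edges. For $f:\mathcal{V}\to\mathbb{R}$, let $\alpha_0<\dots<\alpha_m$ be thresholds with $\alpha_0=\min f$, $\alpha_m=\max f$; $\mathcal{G}_i$ is the subgraph induced by $\{w: f(w)\le\alpha_i\}$ and $\widehat{\mathcal{G}}_i$ its clique (flag) complex (simplices = sets of pairwise adjacent vertices). $PD_k(\mathcal{G},f)$ is the $k$-th persistence diagram (field coefficients) of the sublevel filtration $\widehat{\mathcal{G}}_0\subset\dots\subset\widehat{\mathcal{G}}_m$; for a subgraph the same construction is applied with the restricted $f$ and the same thresholds. *)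

theory Defs
  imports Main "HOL-Library.Multiset" "HOL-Library.Extended_Real" "HOL-Library.Function_Algebras"
begin

definition simple_graph :: "'a set \<Rightarrow> 'a set set \<Rightarrow> bool" where
  "simple_graph V E \<longleftrightarrow> finite V \<and>
     (\<forall>e\<in>E. \<exists>x y. x \<noteq> y \<and> x \<in> V \<and> y \<in> V \<and> e = {x, y})"

definition closed_nbhd :: "'a set set \<Rightarrow> 'a \<Rightarrow> 'a set" where
  "closed_nbhd E w = {w} \<union> {x. {w, x} \<in> E}"

definition dominated :: "'a set \<Rightarrow> 'a set set \<Rightarrow> 'a \<Rightarrow> 'a \<Rightarrow> bool" where
  "dominated V E u v \<longleftrightarrow> u \<in> V \<and> v \<in> V \<and> v \<noteq> u \<and> closed_nbhd E u \<subseteq> closed_nbhd E v"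

definition del_vertex_V :: "'a set \<Rightarrow> 'a \<Rightarrow> 'a set" where
  "del_vertex_V V u = V - {u}"

definition del_vertex_E :: "'a set set \<Rightarrow> 'a \<Rightarrow> 'a set set" where
  "del_vertex_E E u = {e \<in> E. u \<notin> e}"

definition sublevel :: "'a set \<Rightarrow> ('a \<Rightarrow> real) \<Rightarrow> real \<Rightarrow> 'a set" where
  "sublevel V f t = {w \<in> V. f w \<le> t}"

definition clique_complex :: "'a set \<Rightarrow> 'a set set \<Rightarrow> 'a set set" where
  "clique_complex W E = {\<sigma>. \<sigma> \<noteq> {} \<and> finite \<sigma> \<and> \<sigma> \<subseteq> W \<and>
                              (\<forall>x\<in>\<sigma>. \<forall>y\<in>\<sigma>. x \<noteq> y \<longrightarrow> {x, y} \<in> E)}"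

definition filt :: "'a set \<Rightarrow> 'a set set \<Rightarrow> ('a \<Rightarrow> real) \<Rightarrow> (nat \<Rightarrow> real) \<Rightarrow> nat \<Rightarrow> 'a set set" where
  "filt V E f \<alpha> i = clique_complex (sublevel V f (\<alpha> i)) E"

text \<open>Chains are functions from (vertex sets of) simplices to the field; orientation
  is induced by the linear order on vertices.\<close>

definition chains :: "'k itself \<Rightarrow> 'a set set \<Rightarrow> nat \<Rightarrow> ('a set \<Rightarrow> 'k::field) set" where
  "chains _ K k = {c. \<forall>\<sigma>. c \<sigma> \<noteq> 0 \<longrightarrow> \<sigma> \<in> K \<and> card \<sigma> = Suc k}"

text \<open>Boundary of a k-chain (zero for k = 0, i.e. non-augmented complex).\<close>
definition bdry :: "'a set set \<Rightarrow> nat \<Rightarrow> ('a set \<Rightarrow> 'k::field) \<Rightarrow> ('a::linorder set \<Rightarrow> 'k)" where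
  "bdry K k c = (\<lambda>\<tau>. \<Sum>\<sigma> \<in> {\<sigma> \<in> K. card \<sigma> = Suc k \<and> \<tau> \<subseteq> \<sigma> \<and> \<tau> \<noteq> {} \<and> card \<tau> = k}.
       (-1) ^ card {y \<in> \<sigma>. y < the_elem (\<sigma> - \<tau>)} * c \<sigma>)"

definition cycles :: "'k itself \<Rightarrow> 'a::linorder set set \<Rightarrow> nat \<Rightarrow> ('a set \<Rightarrow> 'k::field) set" where
  "cycles F K k = {c \<in> chains F K k. bdry K k c = (\<lambda>_. 0)}"

definition boundaries :: "'k itself \<Rightarrow> 'a::linorder set set \<Rightarrow> nat \<Rightarrow> ('a set \<Rightarrow> 'k::field) set" where
  "boundaries F K k = bdry K (Suc k) ` chains F K (Suc k)"

definition fdim :: "('b \<Rightarrow> 'k::field) set \<Rightarrow> nat" where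
  "fdim S = vector_space.dim (\<lambda>(a::'k) (x::'b \<Rightarrow> 'k). (\<lambda>y. a * x y)) S"

text \<open>Persistent Betti number: rank of H_k(K) \<rightarrow> H_k(L) induced by inclusion K \<subseteq> L,
  i.e. dim (Z_k(K) + B_k(L)) - dim B_k(L).\<close>
definition pers_betti :: "'k::field itself \<Rightarrow> 'a::linorder set set \<Rightarrow> 'a set set \<Rightarrow> nat \<Rightarrow> nat" where
  "pers_betti F K L k =
     fdim {(\<lambda>x. a x + b x) | a b. a \<in> cycles F K k \<and> b \<in> boundaries F L k} - fdim (boundaries F L k)"

text \<open>beta^{i,j}_k of the filtration, with beta^{-1,j} = 0 (index i is shifted: argument i
  stands for filtration index i - 1 when used with \<open>bet\<close> below).\<close>
definition betti_ij :: "'k::field itself \<Rightarrow> 'a::linorder set \<Rightarrow> 'a set set \<Rightarrow> ('a \<Rightarrow> real)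
     \<Rightarrow> (nat \<Rightarrow> real) \<Rightarrow> nat \<Rightarrow> int \<Rightarrow> nat \<Rightarrow> int" where
  "betti_ij F V E f \<alpha> k i j =
     (if i < 0 then 0 else int (pers_betti F (filt V E f \<alpha> (nat i)) (filt V E f \<alpha> j) k))"

text \<open>Multiplicity of the point (alpha_i, alpha_j), i < j \<le> m, and of (alpha_i, \<infinity>).\<close>
definition mult_fin :: "'k::field itself \<Rightarrow> 'a::linorder set \<Rightarrow> 'a set set \<Rightarrow> ('a \<Rightarrow> real)
     \<Rightarrow> (nat \<Rightarrow> real) \<Rightarrow> nat \<Rightarrow> nat \<Rightarrow> nat \<Rightarrow> int" where
  "mult_fin F V E f \<alpha> k i j =
     betti_ij F V E f \<alpha> k (int i) (j - 1) - betti_ij F V E f \<alpha> k (int i) j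
     - betti_ij F V E f \<alpha> k (int i - 1) (j - 1) + betti_ij F V E f \<alpha> k (int i - 1) j"

definition mult_inf :: "'k::field itself \<Rightarrow> 'a::linorder set \<Rightarrow> 'a set set \<Rightarrow> ('a \<Rightarrow> real)
     \<Rightarrow> (nat \<Rightarrow> real) \<Rightarrow> nat \<Rightarrow> nat \<Rightarrow> nat \<Rightarrow> int" where
  "mult_inf F V E f \<alpha> m k i =
     betti_ij F V E f \<alpha> k (int i) m - betti_ij F V E f \<alpha> k (int i - 1) m"

text \<open>The k-th persistence diagram of the sublevel clique filtration with thresholds
  alpha_0 < ... < alpha_m, as a multiset of (birth, death) points (death may be \<infinity>);
  diagonal points are omitted.\<close>
definition PD :: "'k::field itself \<Rightarrow> nat \<Rightarrow> 'a::linorder set \<Rightarrow> 'a set set \<Rightarrow> ('a \<Rightarrow> real)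
     \<Rightarrow> (nat \<Rightarrow> real) \<Rightarrow> nat \<Rightarrow> (real \<times> ereal) multiset" where
  "PD F k V E f \<alpha> m =
     (\<Sum>i\<in>{0..m}. \<Sum>j\<in>{i<..m}. replicate_mset (nat (mult_fin F V E f \<alpha> k i j)) (\<alpha> i, ereal (\<alpha> j)))
     + (\<Sum>i\<in>{0..m}. replicate_mset (nat (mult_inf F V E f \<alpha> m k i)) (\<alpha> i, PInfty))"

end

theory Submission
  imports Defs
begin


definition cnt :: "'a::linorder set \<Rightarrow> 'a \<Rightarrow> nat" where
  "cnt s x = card {y\<in>s. y < x}"

definition sg :: "'a::linorder set \<Rightarrow> 'a \<Rightarrow> 'k::field" where
  "sg s x = (-1) ^ cnt s x"

lemma cnt_insert: "finite s \<Longrightarrow> a \<notin> s \<Longrightarrow> cnt (insert a s) x = (if a < x then Suc (cnt s x) else cnt s x)"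
proof -
  assume f: "finite s" and a: "a \<notin> s"
  have "{y\<in>insert a s. y < x} = (if a < x then insert a {y\<in>s. y < x} else {y\<in>s. y < x})" by auto
  then show ?thesis using f a by (simp add: cnt_def)
qed

lemma sg_insert: "finite s \<Longrightarrow> a \<notin> s \<Longrightarrow> sg (insert a s) x = (if a < x then - sg s x else (sg s x :: 'k::field))"
  by (simp add: sg_def cnt_insert)

lemma cnt_insert_self: "cnt (insert x s) x = cnt s x"
  unfolding cnt_def by (rule arg_cong[where f=card]) auto

lemma sg_insert_self[simp]: "sg (insert x s) x = sg s x"
  by (simp add: sg_def cnt_insert_self)

lemma cnt_remove_self: "cnt (s - {x}) x = cnt s x"
  unfolding cnt_def by (rule arg_cong[where f=card]) auto

lemma sg_remove_self[simp]: "sg (s - {x}) x = sg s x"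
  by (simp add: sg_def cnt_remove_self)

lemma sg_sq[simp]: "sg s x * sg s x = (1::'k::field)"
  by (simp add: sg_def power_mult_distrib[symmetric] power_add[symmetric] flip: power_mult) 

definition D :: "'a::linorder set \<Rightarrow> nat \<Rightarrow> ('a set \<Rightarrow> 'k::field) \<Rightarrow> 'a set \<Rightarrow> 'k" where
  "D V k c t = (if finite t \<and> t \<noteq> {} \<and> card t = k then (\<Sum>w\<in>V - t. sg t w * c (insert w t)) else 0)"

lemma bdry_eq:
  fixes c :: "'a::linorder set \<Rightarrow> 'k::field"
  assumes V: "finite V" and XV: "\<forall>s\<in>X. s \<subseteq> V" and c: "c \<in> chains F X k"
  shows "bdry X k c = D V k c"
proof
  fix t
  show "bdry X k c t = D V k c t"
  proof (cases "finite t \<and> t \<noteq> {} \<and> card t = k")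
    case False
    have emp: "{\<sigma> \<in> X. card \<sigma> = Suc k \<and> t \<subseteq> \<sigma> \<and> t \<noteq> {} \<and> card t = k} = {}"
    proof (rule ccontr)
      assume "\<not> ?thesis"
      then obtain s where "card s = Suc k" "t \<subseteq> s" "t \<noteq> {}" "card t = k" by auto
      then have "finite t" by (metis card.infinite finite_subset nat.distinct(1))
      then show False using False \<open>t \<noteq> {}\<close> \<open>card t = k\<close> by auto
    qed
    have "bdry X k c t = 0" unfolding bdry_def emp by simp
    then show ?thesis using False by (auto simp: D_def)
  next
    case True
    define S where "S = {\<sigma> \<in> X. card \<sigma> = Suc k \<and> t \<subseteq> \<sigma> \<and> t \<noteq> {} \<and> card t = k}"
    define T where "T = (\<lambda>w. insert w t) ` (V - t)"
    define g where "g = (\<lambda>\<sigma>. (-1::'k) ^ card {y \<in> \<sigma>. y < the_elem (\<sigma> - t)} * c \<sigma>)"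
    have ST: "S \<subseteq> T"
    proof
      fix s assume s: "s \<in> S"
      then have fs: "finite s" "card s = Suc k" "t \<subseteq> s" "s \<subseteq> V" using XV S_def card.infinite by fastforce+
      then have "card (s - t) = Suc 0" using True by (simp add: card_Diff_subset)
      then obtain w where w: "s - t = {w}" by (auto simp: card_Suc_eq)
      then have "s = insert w t" "w \<in> V - t" using fs by auto
      then show "s \<in> T" unfolding T_def by blast
    qed
    have "bdry X k c t = sum g S" by (simp add: bdry_def S_def g_def)
    also have "\<dots> = sum g T"
    proof (rule sum.mono_neutral_left)
      show "finite T" using V T_def by simp
      show "S \<subseteq> T" by (rule ST)
      show "\<forall>i\<in>T - S. g i = 0"
      proof
        fix s assume s: "s \<in> T - S"
        then obtain w where w: "w \<in> V - t" "s = insert w t" unfolding T_def by blast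
        then have "card s = Suc k" "t \<subseteq> s" using True by auto
        then have "s \<notin> X" using s True S_def by auto
        then have "c s = 0" using c unfolding chains_def by auto
        then show "g s = 0" by (simp add: g_def)
      qed
    qed
    also have "\<dots> = (\<Sum>w\<in>V - t. g (insert w t))"
      unfolding T_def by (subst sum.reindex) (auto simp: inj_on_def)
    also have "\<dots> = (\<Sum>w\<in>V - t. sg t w * c (insert w t))"
    proof (rule sum.cong)
      fix w assume w: "w \<in> V - t"
      then have e: "insert w t - t = {w}" by auto
      have "g (insert w t) = sg (insert w t) w * c (insert w t)"
        by (simp add: g_def e sg_def cnt_def)
      then show "g (insert w t) = sg t w * c (insert w t)" by simp
    qed simp
    finally show ?thesis using True by (simp add: D_def)
  qed
qed

lemma DD:
  fixes c :: "'a::linorder set \<Rightarrow> 'k::field"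
  assumes V: "finite V"
  shows "D V k (D V (Suc k) c) = (\<lambda>_. 0)"
proof
  fix t
  show "D V k (D V (Suc k) c) t = 0"
  proof (cases "finite t \<and> t \<noteq> {} \<and> card t = k")
    case False then show ?thesis by (auto simp add: D_def)
  next
    case True
    define tt where "tt = (\<lambda>(w, x). sg t w * sg (insert w t) x * c (insert x (insert w t)))"
    define P where "P = Sigma (V - t) (\<lambda>w. V - insert w t)"
    define P1 where "P1 = {p \<in> P. fst p < snd p}"
    define P2 where "P2 = {p \<in> P. snd p < fst p}"
    have fP: "finite P" using V by (simp add: P_def)
    have "D V k (D V (Suc k) c) t = (\<Sum>w\<in>V - t. sg t w * D V (Suc k) c (insert w t))"
      using True by (simp add: D_def)
    also have "\<dots> = (\<Sum>w\<in>V - t. (\<Sum>x\<in>V - insert w t. sg t w * (sg (insert w t) x * c (insert x (insert w t)))))"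
    proof (rule sum.cong)
      fix w assume w: "w \<in> V - t"
      then have "finite (insert w t) \<and> insert w t \<noteq> {} \<and> card (insert w t) = Suc k" using True by auto
      then show "sg t w * D V (Suc k) c (insert w t) = (\<Sum>x\<in>V - insert w t. sg t w * (sg (insert w t) x * c (insert x (insert w t))))"
        by (simp add: D_def sum_distrib_left)
    qed simp
    also have "\<dots> = sum tt P"
      unfolding P_def tt_def using V by (subst sum.Sigma) (auto simp: mult.assoc)
    also have "\<dots> = sum tt P1 + sum tt P2"
      unfolding P1_def P2_def using fP by (subst sum.union_disjoint[symmetric]) (auto intro!: sum.cong simp: P_def)
    also have "sum tt P2 = sum (tt \<circ> prod.swap) P1"
    proof -
      have "P2 = prod.swap ` P1" unfolding P1_def P2_def P_def by auto
      then show ?thesis by (simp add: sum.reindex)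
    qed
    also have "sum (tt \<circ> prod.swap) P1 = sum (\<lambda>p. - tt p) P1"
    proof (rule sum.cong)
      fix p assume p: "p \<in> P1"
      obtain w x where px: "p = (w, x)" by fastforce
      then have wx: "w \<in> V" "x \<in> V" "w \<notin> t" "x \<notin> t" "w < x" using p by (auto simp: P1_def P_def)
      have "(tt \<circ> prod.swap) p = sg t x * sg (insert x t) w * c (insert w (insert x t))"
        by (simp add: px tt_def)
      also have "\<dots> = sg t x * sg t w * c (insert x (insert w t))"
        using wx True by (simp add: sg_insert insert_commute[of w x] less_not_sym[OF wx(5)])
      also have "\<dots> = - tt p" using wx True by (simp add: px tt_def sg_insert)
      finally show "(tt \<circ> prod.swap) p = - tt p" .
    qed simp
    finally show ?thesis by (simp add: sum_negf)
  qed
qed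

definition H :: "'a::linorder \<Rightarrow> 'a \<Rightarrow> ('a set \<Rightarrow> 'k::field) \<Rightarrow> 'a set \<Rightarrow> 'k" where
  "H u v c s = (if u \<in> s \<and> v \<in> s then sg s v * c (s - {v}) else 0)"

definition Phi :: "'a::linorder set \<Rightarrow> 'a \<Rightarrow> 'a \<Rightarrow> nat \<Rightarrow> ('a set \<Rightarrow> 'k::field) \<Rightarrow> 'a set \<Rightarrow> 'k" where
  "Phi V u v k c = c - D V (Suc k) (H u v c) - H u v (D V k c)"

lemma D_add: "D V k (a + b) = D V k a + D V k b"
  by (auto simp: D_def fun_eq_iff sum.distrib distrib_left)
lemma D_diff: "D V k (a - b) = D V k a - D V k b"
  by (auto simp: D_def fun_eq_iff sum_subtractf right_diff_distrib)
lemma D_zero: "D V k 0 = 0"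
  by (auto simp: D_def fun_eq_iff)
lemma D_scale: "D V k (\<lambda>y. r * a y) = (\<lambda>y. r * D V k a y)"
  by (auto simp: D_def fun_eq_iff sum_distrib_left mult.left_commute)
lemma D0: "D V 0 c = 0"
  by (auto simp: D_def fun_eq_iff)

lemma H_add: "H u v (a + b) = H u v a + H u v b"
  by (auto simp: H_def fun_eq_iff distrib_left)
lemma H_diff: "H u v (a - b) = H u v a - H u v b"
  by (auto simp: H_def fun_eq_iff right_diff_distrib)
lemma H_zero: "H u v 0 = 0"
  by (auto simp: H_def fun_eq_iff)
lemma H_scale: "H u v (\<lambda>y. r * a y) = (\<lambda>y. r * H u v a y)"
  by (auto simp: H_def fun_eq_iff mult.left_commute)

lemma Phi_add: "Phi V u v k (a + b) = Phi V u v k a + Phi V u v k b"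
  by (simp add: Phi_def D_add H_add)
lemma Phi_diff: "Phi V u v k (a - b) = Phi V u v k a - Phi V u v k b"
  by (simp add: Phi_def D_diff H_diff)
lemma Phi_zero: "Phi V u v k 0 = 0"
  by (simp add: Phi_def D_zero H_zero)
lemma Phi_scale: "Phi V u v k (\<lambda>y. r * a y) = (\<lambda>y. r * Phi V u v k a y)"
  by (simp add: Phi_def D_scale H_scale fun_eq_iff right_diff_distrib)

lemma DD0: "finite V \<Longrightarrow> D V k (D V (Suc k) c) = 0"
  by (simp add: DD zero_fun_def)

lemma Phi_chain:
  assumes "finite V"
  shows "D V (Suc k) (Phi V u v (Suc k) c) = Phi V u v k (D V (Suc k) c)"
  by (simp add: Phi_def D_diff DD0[OF assms] H_zero)

lemma Phi_kill:
  fixes c :: "'a::linorder set \<Rightarrow> 'k::field"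
  assumes V: "u \<in> V" "v \<in> V" "u \<noteq> v" and fV: "finite V"
    and c: "\<And>s. c s \<noteq> 0 \<Longrightarrow> finite s \<and> card s = Suc k"
    and us: "u \<in> s"
  shows "Phi V u v k c s = 0"
proof (cases "v \<in> s")
  case False
  have "D V (Suc k) (H u v c) s = c s"
  proof (cases "finite s \<and> card s = Suc k")
    case True
    have "D V (Suc k) (H u v c) s = (\<Sum>w\<in>V - s. sg s w * H u v c (insert w s))"
      using True us by (auto simp: D_def)
    also have "\<dots> = (\<Sum>w\<in>V - s. if w = v then c s else 0)"
    proof (rule sum.cong)
      fix w assume w: "w \<in> V - s"
      show "sg s w * H u v c (insert w s) = (if w = v then c s else 0)"
      proof (cases "w = v")
        case True
        then have "insert w s - {v} = s" using False by auto
        then show ?thesis using True us by (simp add: H_def mult.assoc[symmetric])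
      qed (use False in \<open>auto simp: H_def\<close>)
    qed simp
    also have "\<dots> = c s" using V False fV by simp
    finally show ?thesis .
  next
    case False
    then show ?thesis using c by (auto simp: D_def)
  qed
  moreover have "H u v (D V k c) s = 0" using False by (simp add: H_def)
  ultimately show ?thesis by (simp add: Phi_def)
next
  case True
  define r where "r = s - {v}"
  have sr: "s = insert v r" "v \<notin> r" "u \<in> r" using True us V by (auto simp: r_def)
  show ?thesis
  proof (cases "finite s \<and> card s = Suc k")
    case False
    then have "c s = 0" using c by auto
    moreover have "D V (Suc k) (H u v c) s = 0" using False by (auto simp: D_def)
    moreover have "D V k c r = 0" using False sr by (auto simp: D_def)
    ultimately show ?thesis using True us by (simp add: Phi_def H_def r_def)
  next
    case cs: True
    then have fr: "finite r" "card r = k" "r \<noteq> {}" using sr by auto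
    have e1: "V - r = insert v (V - s)" using sr V by auto
    have "D V k c r = (\<Sum>w\<in>insert v (V - s). sg r w * c (insert w r))"
      using fr by (simp add: D_def e1)
    also have "\<dots> = sg r v * c (insert v r) + (\<Sum>w\<in>V - s. sg r w * c (insert w r))"
      using fV True by (simp add: sum.insert)
    finally have "D V k c r = sg r v * c s + (\<Sum>w\<in>V - s. sg r w * c (insert w r))"
      using sr(1) by simp
    moreover have "D V (Suc k) (H u v c) s = (\<Sum>w\<in>V - s. - (sg r v * (sg r w * c (insert w r))))"
    proof -
      have "D V (Suc k) (H u v c) s = (\<Sum>w\<in>V - s. sg s w * H u v c (insert w s))"
        using cs us by (auto simp: D_def)
      also have "\<dots> = (\<Sum>w\<in>V - s. - (sg r v * (sg r w * c (insert w r))))"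
      proof (rule sum.cong)
        fix w assume w: "w \<in> V - s"
        then have wv: "w \<noteq> v" "w \<notin> r" using sr by auto
        have e2: "insert w s - {v} = insert w r" using sr wv by auto
        have e3: "sg (insert w s) v = (sg (insert w r) v :: 'k)"
          using sr by (simp add: insert_commute[of w v])
        have "sg s w * H u v c (insert w s) = sg s w * sg (insert w r) v * c (insert w r)"
          using sr e2 e3 by (simp add: H_def)
        also have "\<dots> = - (sg r v * (sg r w * c (insert w r)))"
        proof (cases "v < w")
          case True
          then show ?thesis using sr wv fr by (simp add: sg_insert less_not_sym)
        next
          case False
          then have "w < v" using wv by auto
          then show ?thesis using sr wv fr by (simp add: sg_insert less_not_sym)
        qed
        finally show "sg s w * H u v c (insert w s) = - (sg r v * (sg r w * c (insert w r)))" .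
      qed simp
      finally show ?thesis .
    qed
    moreover have "sg s v = (sg r v :: 'k)" using sr by simp
    moreover have "H u v (D V k c) s = sg s v * D V k c r"
      using True us by (simp add: H_def r_def)
    ultimately have "Phi V u v k c s = c s + sg r v * (\<Sum>w\<in>V - s. sg r w * c (insert w r))
        - sg r v * (sg r v * c s + (\<Sum>w\<in>V - s. sg r w * c (insert w r)))"
      by (simp add: Phi_def sum_negf sum_distrib_left)
    also have "\<dots> = c s - (sg r v * sg r v) * c s" by (simp add: algebra_simps)
    also have "\<dots> = 0" by simp
    finally show ?thesis .
  qed
qed

definition good :: "'a set \<Rightarrow> 'a \<Rightarrow> 'a \<Rightarrow> 'a set set \<Rightarrow> bool" where
  "good V u v X \<longleftrightarrow> (\<forall>s\<in>X. finite s \<and> s \<subseteq> V \<and> s \<noteq> {}) \<and>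
     (\<forall>s\<in>X. \<forall>t. t \<subseteq> s \<and> t \<noteq> {} \<longrightarrow> t \<in> X) \<and> (\<forall>s\<in>X. u \<in> s \<longrightarrow> insert v s \<in> X)"

lemma good_fin: "good V u v X \<Longrightarrow> s \<in> X \<Longrightarrow> finite s \<and> s \<subseteq> V \<and> s \<noteq> {}"
  unfolding good_def by (erule conjE) (erule bspec)
lemma good_down: "good V u v X \<Longrightarrow> s \<in> X \<Longrightarrow> t \<subseteq> s \<Longrightarrow> t \<noteq> {} \<Longrightarrow> t \<in> X"
  unfolding good_def by (elim conjE, drule bspec, assumption, drule spec, erule mp, rule conjI)
lemma good_uv: "good V u v X \<Longrightarrow> s \<in> X \<Longrightarrow> u \<in> s \<Longrightarrow> insert v s \<in> X"
  unfolding good_def by (elim conjE, drule bspec, assumption, erule mp)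

lemma chains_mono: "X \<subseteq> Y \<Longrightarrow> chains F X k \<subseteq> chains F Y k"
  by (auto simp: chains_def)
lemma chains_add: "a \<in> chains F X k \<Longrightarrow> b \<in> chains F X k \<Longrightarrow> a + b \<in> chains F X k"
proof -
  assume a: "a \<in> chains F X k" and b: "b \<in> chains F X k"
  show ?thesis
  proof (unfold chains_def, intro CollectI allI impI)
    fix s assume "(a + b) s \<noteq> 0"
    then have "a s \<noteq> 0 \<or> b s \<noteq> 0" by auto
    then show "s \<in> X \<and> card s = Suc k" using a b by (auto simp: chains_def)
  qed
qed
lemma chains_diff: "a \<in> chains F X k \<Longrightarrow> b \<in> chains F X k \<Longrightarrow> a - b \<in> chains F X k"
proof -
  assume a: "a \<in> chains F X k" and b: "b \<in> chains F X k"
  show ?thesis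
  proof (unfold chains_def, intro CollectI allI impI)
    fix s assume "(a - b) s \<noteq> 0"
    then have "a s \<noteq> 0 \<or> b s \<noteq> 0" by auto
    then show "s \<in> X \<and> card s = Suc k" using a b by (auto simp: chains_def)
  qed
qed
lemma chains_fin: "c \<in> chains F X k \<Longrightarrow> c s \<noteq> 0 \<Longrightarrow> finite s \<and> card s = Suc k"
proof -
  assume "c \<in> chains F X k" "c s \<noteq> 0"
  then have "card s = Suc k" by (auto simp: chains_def)
  then show ?thesis by (simp add: card_ge_0_finite)
qed
lemma chains_zero: "0 \<in> chains F X k"
  by (auto simp: chains_def)
lemma chains_scale: "a \<in> chains F X k \<Longrightarrow> (\<lambda>y. r * a y) \<in> chains F X k"
  by (auto simp: chains_def)

lemma D_chains:
  assumes g: "good V u v X" and c: "c \<in> chains F X (Suc k)"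
  shows "D V (Suc k) c \<in> chains F X k"
proof (unfold chains_def, intro CollectI allI impI)
  fix t assume nz: "D V (Suc k) c t \<noteq> 0"
  have t: "finite t \<and> t \<noteq> {} \<and> card t = Suc k"
  proof (rule ccontr)
    assume "\<not> (finite t \<and> t \<noteq> {} \<and> card t = Suc k)"
    then have "D V (Suc k) c t = 0" unfolding D_def by (rule if_not_P)
    then show False using nz by contradiction
  qed
  then have "(\<Sum>w\<in>V - t. sg t w * c (insert w t)) \<noteq> 0" using nz unfolding D_def by simp
  then obtain w where "sg t w * c (insert w t) \<noteq> 0" by (meson sum.not_neutral_contains_not_neutral)
  then have "c (insert w t) \<noteq> 0" by auto
  then have "insert w t \<in> X" using c unfolding chains_def by blast
  then have "t \<in> X" using good_down[OF g, of "insert w t" t] t by blast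
  then show "t \<in> X \<and> card t = Suc k" using t by simp
qed

lemma H_chains:
  assumes g: "good V u v X" and uv: "u \<noteq> v" and c: "c \<in> chains F X k"
  shows "H u v c \<in> chains F X (Suc k)"
  unfolding chains_def mem_Collect_eq
proof (intro allI impI)
  fix s assume h: "H u v c s \<noteq> 0"
  have uvs: "u \<in> s \<and> v \<in> s"
  proof (rule ccontr)
    assume "\<not> (u \<in> s \<and> v \<in> s)"
    then have "H u v c s = 0" unfolding H_def by (rule if_not_P)
    then show False using h by contradiction
  qed
  then have "H u v c s = sg s v * c (s - {v})" unfolding H_def by (rule if_P)
  then have s: "u \<in> s" "v \<in> s" "c (s - {v}) \<noteq> 0" using uvs h by auto
  then have r: "s - {v} \<in> X" "card (s - {v}) = Suc k" using c by (auto simp: chains_def)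
  have "u \<in> s - {v}" using s uv by auto
  then have "insert v (s - {v}) \<in> X" using r good_uv[OF g] by blast
  then have sX: "s \<in> X" using s by (simp add: insert_absorb)
  then have "finite s" using good_fin[OF g] by blast
  then have "card s = Suc (card (s - {v}))" using s(2) by (rule card.remove)
  then show "s \<in> X \<and> card s = Suc (Suc k)" using sX r by simp
qed

lemma HD_chains:
  assumes g: "good V u v X" and uv: "u \<noteq> v" and c: "c \<in> chains F X k"
  shows "H u v (D V k c) \<in> chains F X k"
proof (cases k)
  case 0 then show ?thesis by (simp add: D0 H_zero chains_zero)
next
  case (Suc j)
  then show ?thesis using H_chains[OF g uv D_chains[OF g]] c by simp
qed

lemma Phi_chains:
  assumes g: "good V u v X" and uv: "u \<noteq> v" and fV: "finite V" and uV: "u \<in> V" "v \<in> V"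
    and c: "c \<in> chains F X k"
  shows "Phi V u v k c \<in> chains F {s\<in>X. u \<notin> s} k"
proof -
  have 1: "Phi V u v k c \<in> chains F X k" unfolding Phi_def
    by (intro chains_diff c HD_chains[OF g uv] D_chains[OF g] H_chains[OF g uv])
  have 2: "Phi V u v k c s = 0" if "u \<in> s" for s
    by (rule Phi_kill[OF uV uv fV _ that]) (use chains_fin[OF c] in blast)
  show ?thesis
  proof (unfold chains_def, intro CollectI allI impI)
    fix s assume "Phi V u v k c s \<noteq> 0"
    then show "s \<in> {s \<in> X. u \<notin> s} \<and> card s = Suc k" using 1 2 unfolding chains_def by blast
  qed
qed

lemma Phi_id:
  assumes uv: "u \<noteq> v" and c: "\<And>s. u \<in> s \<Longrightarrow> c s = 0"
  shows "Phi V u v k c = c"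
proof -
  have "H u v c = 0" using c uv by (auto simp: H_def fun_eq_iff)
  moreover have "D V k c t = 0" if "u \<in> t" for t
    using c that by (simp add: D_def)
  then have "H u v (D V k c) = 0" using uv by (auto simp: H_def fun_eq_iff)
  ultimately show ?thesis unfolding Phi_def by (simp only: D_zero diff_zero)
qed


interpretation fvs: vector_space "\<lambda>(a::'k::field) (x::'b \<Rightarrow> 'k) y. a * x y"
  by unfold_locales (auto simp: fun_eq_iff algebra_simps)

lemma fdim_eq: "fdim (S :: ('b \<Rightarrow> 'k::field) set) = fvs.dim S"
  by (simp add: fdim_def)

lemma dim_direct:
  fixes S S1 S2 W :: "('b \<Rightarrow> 'k::field) set"
  assumes sS1: "fvs.subspace S1" and sS2: "fvs.subspace S2"
    and sub: "S1 \<subseteq> S" "S2 \<subseteq> S" and int: "S1 \<inter> S2 \<subseteq> {0}"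
    and dec: "\<forall>x\<in>S. \<exists>a\<in>S1. \<exists>b\<in>S2. x = a + b"
    and W: "S \<subseteq> fvs.span W" "finite W"
  shows "fvs.dim S = fvs.dim S1 + fvs.dim S2"
proof -
  obtain B1 where B1: "B1 \<subseteq> S1" "fvs.independent B1" "S1 \<subseteq> fvs.span B1" "card B1 = fvs.dim S1"
    by (rule fvs.basis_exists)
  obtain B2 where B2: "B2 \<subseteq> S2" "fvs.independent B2" "S2 \<subseteq> fvs.span B2" "card B2 = fvs.dim S2"
    by (rule fvs.basis_exists)
  have fB1: "finite B1" using fvs.independent_span_bound[OF W(2) B1(2)] B1(1) sub W(1) by blast
  have fB2: "finite B2" using fvs.independent_span_bound[OF W(2) B2(2)] B2(1) sub W(1) by blast
  have spB1: "fvs.span B1 \<subseteq> S1" using fvs.span_minimal[OF B1(1) sS1] .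
  have spB2: "fvs.span B2 \<subseteq> S2" using fvs.span_minimal[OF B2(1) sS2] .
  have ind: "finite C \<Longrightarrow> C \<subseteq> B2 \<Longrightarrow> fvs.independent (B1 \<union> C)" for C
  proof (induction C rule: finite_induct)
    case empty then show ?case using B1(2) by simp
  next
    case (insert b C)
    have bB2: "b \<in> B2" and CB2: "C \<subseteq> B2" using insert by auto
    have nb: "b \<notin> fvs.span (B1 \<union> C)"
    proof
      assume "b \<in> fvs.span (B1 \<union> C)"
      then obtain x y where xy: "b = x + y" "x \<in> fvs.span B1" "y \<in> fvs.span C"
        unfolding fvs.span_Un by blast
      have yS2: "y \<in> S2" using xy(3) fvs.span_mono[OF CB2] spB2 by blast
      have bS2: "b \<in> S2" using bB2 B2(1) by blast
      have "x = b - y" using xy(1) by simp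
      then have "x \<in> S2" using fvs.subspace_diff[OF sS2 bS2 yS2] by simp
      moreover have "x \<in> S1" using xy(2) spB1 by blast
      ultimately have "x = 0" using int by blast
      then have "b \<in> fvs.span C" using xy by simp
      moreover have "C \<subseteq> B2 - {b}" using CB2 insert(2) by blast
      ultimately have "b \<in> fvs.span (B2 - {b})" using fvs.span_mono by blast
      then have "fvs.dependent B2" using bB2 unfolding fvs.dependent_def by blast
      then show False using B2(2) by contradiction
    qed
    have "fvs.independent (insert b (B1 \<union> C))"
      by (rule fvs.independent_insertI[OF nb insert(3)[OF CB2]])
    then show ?case by simp
  qed
  have indB: "fvs.independent (B1 \<union> B2)" using ind[OF fB2] by simp
  have disj: "B1 \<inter> B2 = {}"
  proof (rule ccontr)
    assume "B1 \<inter> B2 \<noteq> {}"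
    then obtain x where "x \<in> B1" "x \<in> B2" by blast
    then have "x = 0" using B1(1) B2(1) int by blast
    then have "fvs.dependent B1" using \<open>x \<in> B1\<close> fvs.dependent_zero by blast
    then show False using B1(2) by contradiction
  qed
  have sp: "S \<subseteq> fvs.span (B1 \<union> B2)"
  proof
    fix x assume "x \<in> S"
    then obtain a b where ab: "a \<in> S1" "b \<in> S2" "x = a + b" using dec by blast
    have "a \<in> fvs.span (B1 \<union> B2)" using ab(1) B1(3) fvs.span_mono[of B1 "B1 \<union> B2"] by blast
    moreover have "b \<in> fvs.span (B1 \<union> B2)" using ab(2) B2(3) fvs.span_mono[of B2 "B1 \<union> B2"] by blast
    ultimately show "x \<in> fvs.span (B1 \<union> B2)" using ab(3) fvs.span_add by simp
  qed
  have "card (B1 \<union> B2) = fvs.dim S"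
    by (rule fvs.basis_card_eq_dim) (use B1(1) B2(1) sub sp indB in blast)+
  then show ?thesis using card_Un_disjoint[OF fB1 fB2 disj] B1(4) B2(4) by simp
qed

lemma fun_sum_apply: "(sum g A) y = (\<Sum>x\<in>A. g x y)"
  by (induction A rule: infinite_finite_induct) auto

lemma chains_span:
  fixes c :: "'a set \<Rightarrow> 'k::field"
  assumes fL: "finite L" and c: "c \<in> chains F L k"
  shows "c \<in> fvs.span ((\<lambda>s t. if t = s then (1::'k) else 0) ` L)"
proof -
  let ?W = "(\<lambda>s t. if t = s then (1::'k) else 0) ` L"
  have "c = (\<Sum>s\<in>L. (\<lambda>t. c s * (if t = s then 1 else 0)))"
  proof
    fix t
    have "(\<Sum>s\<in>L. (\<lambda>t. c s * (if t = s then 1 else 0))) t = (\<Sum>s\<in>L. c s * (if t = s then 1 else 0))"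
      by (simp add: fun_sum_apply)
    also have "\<dots> = (if t \<in> L then c t else 0)"
      using fL by (simp add: if_distrib[of "\<lambda>x. c _ * x"] sum.delta' cong: if_cong)
    also have "\<dots> = c t" using c by (auto simp: chains_def)
    finally show "c t = (\<Sum>s\<in>L. (\<lambda>t. c s * (if t = s then 1 else 0))) t" by simp
  qed
  also have "\<dots> \<in> fvs.span ?W"
  proof (rule fvs.span_sum)
    fix s assume "s \<in> L"
    then have "(\<lambda>t. if t = s then (1::'k) else 0) \<in> fvs.span ?W" by (intro fvs.span_base) blast
    from fvs.span_scale[OF this, of "c s"] show "(\<lambda>t. c s * (if t = s then 1 else 0)) \<in> fvs.span ?W" by simp
  qed
  finally show ?thesis .
qed

lemma D_vanish: "(\<And>s. u \<in> s \<Longrightarrow> c s = 0) \<Longrightarrow> u \<in> t \<Longrightarrow> D V k c t = 0"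
  by (simp add: D_def)

lemma main_lin:
  fixes F :: "'k::field itself" and V :: "'a::linorder set"
  assumes fV: "finite V" and uV: "u \<in> V" "v \<in> V" and uv: "u \<noteq> v"
    and gK: "good V u v K" and gL: "good V u v L" and KL: "K \<subseteq> L"
  shows "pers_betti F K L k = pers_betti F {s\<in>K. u \<notin> s} {s\<in>L. u \<notin> s} k"
proof -
  define K' where "K' = {s\<in>K. u \<notin> s}"
  define L' where "L' = {s\<in>L. u \<notin> s}"
  have K'K: "K' \<subseteq> K" and L'L: "L' \<subseteq> L" and K'L': "K' \<subseteq> L'" using KL by (auto simp: K'_def L'_def)
  have KV: "\<forall>s\<in>K. s \<subseteq> V" using good_fin[OF gK] by blast
  have LV: "\<forall>s\<in>L. s \<subseteq> V" using good_fin[OF gL] by blast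
  have K'V: "\<forall>s\<in>K'. s \<subseteq> V" using KV K'K by blast
  have L'V: "\<forall>s\<in>L'. s \<subseteq> V" using LV L'L by blast
  have "L \<subseteq> Pow V" using LV by blast
  then have fL: "finite L" using fV by (rule finite_subset[OF _ finite_Pow_iff[THEN iffD2]])
  define P :: "('a set \<Rightarrow> 'k) \<Rightarrow> 'a set \<Rightarrow> 'k" where "P = Phi V u v k"
  define Q :: "('a set \<Rightarrow> 'k) \<Rightarrow> 'a set \<Rightarrow> 'k" where "Q = Phi V u v (Suc k)"
  define ZK where "ZK = {c \<in> chains F K k. D V k c = 0}"
  define ZK' where "ZK' = {c \<in> chains F K' k. D V k c = 0}"
  define BL where "BL = D V (Suc k) ` chains F L (Suc k)"
  define BL' where "BL' = D V (Suc k) ` chains F L' (Suc k)"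
  define A where "A = {a + b | a b. a \<in> ZK \<and> b \<in> BL}"
  define A' where "A' = {a + b | a b. a \<in> ZK' \<and> b \<in> BL'}"
  define NA where "NA = {x \<in> A. P x = 0}"
  define NB where "NB = {x \<in> BL. P x = 0}"
  have cyc: "cycles F X k = {c \<in> chains F X k. D V k c = 0}" if "\<forall>s\<in>X. s \<subseteq> V" for X
  proof -
    have e: "bdry X k c = D V k c" if "c \<in> chains F X k" for c :: "'a set \<Rightarrow> 'k"
      by (rule bdry_eq[OF fV \<open>\<forall>s\<in>X. s \<subseteq> V\<close> that])
    show ?thesis unfolding cycles_def zero_fun_def
    proof (rule Collect_cong)
      fix c :: "'a set \<Rightarrow> 'k"
      show "(c \<in> chains F X k \<and> bdry X k c = (\<lambda>_. 0)) = (c \<in> chains F X k \<and> D V k c = (\<lambda>_. 0))"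
        using e[of c] by (cases "c \<in> chains F X k") simp_all
    qed
  qed
  have bnd: "boundaries F X k = D V (Suc k) ` chains F X (Suc k)" if "\<forall>s\<in>X. s \<subseteq> V" for X
  proof -
    have e: "bdry X (Suc k) c = D V (Suc k) c" if "c \<in> chains F X (Suc k)" for c :: "'a set \<Rightarrow> 'k"
      by (rule bdry_eq[OF fV \<open>\<forall>s\<in>X. s \<subseteq> V\<close> that])
    show ?thesis unfolding boundaries_def using e by (simp cong: image_cong)
  qed
  have pb: "pers_betti F K L k = fvs.dim A - fvs.dim BL"
    unfolding pers_betti_def fdim_eq cyc[OF KV] bnd[OF LV] A_def ZK_def BL_def
    by (simp add: plus_fun_def)
  have pb': "pers_betti F K' L' k = fvs.dim A' - fvs.dim BL'"
    unfolding pers_betti_def fdim_eq cyc[OF K'V] bnd[OF L'V] A'_def ZK'_def BL'_def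
    by (simp add: plus_fun_def)
  have subZ: "fvs.subspace {c \<in> chains F X k. D V k c = 0}" for X
    unfolding fvs.subspace_def
  proof (intro conjI ballI allI)
    show "0 \<in> {c \<in> chains F X k. D V k c = 0}" using chains_zero D_zero by blast
  next
    fix x y assume "x \<in> {c \<in> chains F X k. D V k c = 0}" "y \<in> {c \<in> chains F X k. D V k c = 0}"
    then have "x \<in> chains F X k" "y \<in> chains F X k" "D V k x = 0" "D V k y = 0" by blast+
    then show "x + y \<in> {c \<in> chains F X k. D V k c = 0}" by (simp add: chains_add D_add)
  next
    fix c x assume "x \<in> {c \<in> chains F X k. D V k c = 0}"
    then have "x \<in> chains F X k" "D V k x = 0" by blast+
    then show "(\<lambda>y. c * x y) \<in> {c \<in> chains F X k. D V k c = 0}"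
      by (simp add: chains_scale D_scale zero_fun_def)
  qed
  have subB: "fvs.subspace (D V (Suc k) ` chains F X (Suc k))" for X
    unfolding fvs.subspace_def
  proof (intro conjI ballI allI)
    show "0 \<in> D V (Suc k) ` chains F X (Suc k)" by (rule image_eqI[OF _ chains_zero]) (simp add: D_zero)
  next
    fix x y assume "x \<in> D V (Suc k) ` chains F X (Suc k)" "y \<in> D V (Suc k) ` chains F X (Suc k)"
    then obtain a b where ab: "a \<in> chains F X (Suc k)" "b \<in> chains F X (Suc k)" "x = D V (Suc k) a" "y = D V (Suc k) b" by blast
    show "x + y \<in> D V (Suc k) ` chains F X (Suc k)"
      by (rule image_eqI[OF _ chains_add[OF ab(1,2)]]) (simp add: ab(3,4) D_add)
  next
    fix c x assume "x \<in> D V (Suc k) ` chains F X (Suc k)"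
    then obtain a where a: "a \<in> chains F X (Suc k)" "x = D V (Suc k) a" by blast
    show "(\<lambda>y. c * x y) \<in> D V (Suc k) ` chains F X (Suc k)"
      by (rule image_eqI[OF _ chains_scale[OF a(1), where r=c]]) (simp add: a(2) D_scale)
  qed
  have sZK: "fvs.subspace ZK" and sZK': "fvs.subspace ZK'" using subZ by (simp_all add: ZK_def ZK'_def)
  have sBL: "fvs.subspace BL" and sBL': "fvs.subspace BL'" using subB by (simp_all add: BL_def BL'_def)
  have sA: "fvs.subspace A" unfolding A_def by (rule fvs.subspace_sums[OF sZK sBL])
  have sA': "fvs.subspace A'" unfolding A'_def by (rule fvs.subspace_sums[OF sZK' sBL'])
  have Pl: "P (a + b) = P a + P b" "P (a - b) = P a - P b" "P (\<lambda>y. r * a y) = (\<lambda>y. r * P a y)" "P 0 = 0" for a b r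
    by (simp_all add: P_def Phi_add Phi_diff Phi_scale Phi_zero)
  have sN: "fvs.subspace {x \<in> S. P x = 0}" if sS: "fvs.subspace S" for S
    unfolding fvs.subspace_def
  proof (intro conjI ballI allI)
    show "0 \<in> {x \<in> S. P x = 0}" using fvs.subspace_0[OF sS] Pl(4) by blast
  next
    fix x y assume "x \<in> {x \<in> S. P x = 0}" "y \<in> {x \<in> S. P x = 0}"
    then have "x \<in> S" "y \<in> S" "P x = 0" "P y = 0" by blast+
    then show "x + y \<in> {x \<in> S. P x = 0}" using fvs.subspace_add[OF sS] Pl(1) by simp
  next
    fix c x assume "x \<in> {x \<in> S. P x = 0}"
    then have "x \<in> S" "P x = 0" by blast+
    then show "(\<lambda>y. c * x y) \<in> {x \<in> S. P x = 0}" using fvs.subspace_scale[OF sS, of x c] Pl(3)[of c x]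
      by (simp add: zero_fun_def)
  qed
  have sNA: "fvs.subspace NA" unfolding NA_def by (rule sN[OF sA])
  have sNB: "fvs.subspace NB" unfolding NB_def by (rule sN[OF sBL])
  have chv: "c s = 0" if "c \<in> chains F {s \<in> X. u \<notin> s} j" "u \<in> s" for c :: "'a set \<Rightarrow> 'k" and X j s
    using that unfolding chains_def by blast
  have ZK'v: "z s = 0" if "z \<in> ZK'" "u \<in> s" for z s
    using that chv[of z K k s] by (simp add: ZK'_def K'_def)
  have BL'v: "x s = 0" if xh: "x \<in> BL'" and us: "u \<in> s" for x s
  proof -
    obtain c where c: "c \<in> chains F L' (Suc k)" "x = D V (Suc k) c" using xh BL'_def by blast
    have cv: "\<And>t. u \<in> t \<Longrightarrow> c t = 0" using chv[of c L "Suc k"] c(1) by (simp add: L'_def)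
    show ?thesis unfolding c(2) by (rule D_vanish[OF cv us])
  qed
  have A'v: "x s = 0" if xh: "x \<in> A'" and us: "u \<in> s" for x s
  proof -
    obtain a b where ab: "a \<in> ZK'" "b \<in> BL'" "x = a + b" using xh A'_def by blast
    then show ?thesis using ZK'v[OF ab(1) us] BL'v[OF ab(2) us] by simp
  qed
  have Pid: "P x = x" if "\<And>s. u \<in> s \<Longrightarrow> x s = 0" for x
    unfolding P_def by (rule Phi_id[OF uv that])
  have ZK'ZK: "ZK' \<subseteq> ZK" using chains_mono[OF K'K] unfolding ZK_def ZK'_def by blast
  have BL'BL: "BL' \<subseteq> BL" using chains_mono[OF L'L] unfolding BL_def BL'_def by blast
  have A'A: "A' \<subseteq> A" using ZK'ZK BL'BL unfolding A_def A'_def by blast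
  have z0: "0 \<in> ZK" using chains_zero D_zero unfolding ZK_def by blast
  have BLA: "BL \<subseteq> A"
  proof
    fix x assume "x \<in> BL"
    then have "x = 0 + x \<and> 0 \<in> ZK \<and> x \<in> BL" using z0 by simp
    then show "x \<in> A" unfolding A_def by blast
  qed
  have ZKch: "ZK \<subseteq> chains F L k" using chains_mono[OF KL] unfolding ZK_def by blast
  have BLch: "BL \<subseteq> chains F L k" using D_chains[OF gL] unfolding BL_def by blast
  have Ach: "A \<subseteq> chains F L k" using ZKch BLch chains_add unfolding A_def by blast
  have PZ: "P z \<in> ZK'" if "z \<in> ZK" for z
  proof -
    have zc: "z \<in> chains F K k" "D V k z = 0" using that ZK_def by blast+
    have "P z \<in> chains F K' k" unfolding P_def K'_def by (rule Phi_chains[OF gK uv fV uV zc(1)])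
    moreover have "D V k (P z) = 0"
    proof (cases k)
      case 0 then show ?thesis by (simp add: D0)
    next
      case (Suc j)
      have "D V k (P z) = Phi V u v j (D V (Suc j) z)" unfolding P_def Suc by (rule Phi_chain[OF fV])
      also have "\<dots> = 0" using zc(2) Suc by (simp add: Phi_zero)
      finally show ?thesis .
    qed
    ultimately show ?thesis unfolding ZK'_def by blast
  qed
  have PB: "P (D V (Suc k) b) = D V (Suc k) (Q b)" for b
    unfolding P_def Q_def by (rule Phi_chain[OF fV, symmetric])
  have QL': "Q b \<in> chains F L' (Suc k)" if "b \<in> chains F L (Suc k)" for b
    unfolding Q_def L'_def by (rule Phi_chains[OF gL uv fV uV that])
  have PBL: "P x \<in> BL'" if xh: "x \<in> BL" for x
  proof -
    obtain b where b: "b \<in> chains F L (Suc k)" "x = D V (Suc k) b" using xh BL_def by blast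
    show ?thesis unfolding b(2) PB BL'_def using QL'[OF b(1)] by blast
  qed
  have PA: "P x \<in> A'" if xh: "x \<in> A" for x
  proof -
    obtain a b where ab: "a \<in> ZK" "b \<in> BL" "x = a + b" using xh A_def by blast
    have "P x = P a + P b" using ab(3) Pl(1) by simp
    then show ?thesis unfolding A'_def using PZ[OF ab(1)] PBL[OF ab(2)] by blast
  qed
  have homot: "z - P z = D V (Suc k) (H u v z)" if "z \<in> ZK" for z
  proof -
    have "D V k z = 0" using that ZK_def by blast
    then show ?thesis unfolding P_def Phi_def by (simp add: H_zero)
  qed
  have PP: "P (P x) = P x" if "P x \<in> A' \<or> P x \<in> BL'" for x
    using that A'v BL'v Pid by blast
  let ?W = "(\<lambda>s t. if t = s then (1::'k) else 0) ` L"
  have spanA: "A \<subseteq> fvs.span ?W" using Ach chains_span[OF fL] by blast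
  have spanB: "BL \<subseteq> fvs.span ?W" using BLch chains_span[OF fL] by blast
  have dA: "fvs.dim A = fvs.dim A' + fvs.dim NA"
  proof (rule dim_direct[OF sA' sNA A'A _ _ _ spanA])
    show "NA \<subseteq> A" unfolding NA_def by blast
    show "A' \<inter> NA \<subseteq> {0}"
    proof
      fix x assume x: "x \<in> A' \<inter> NA"
      then have "P x = x" using A'v Pid by blast
      then show "x \<in> {0}" using x NA_def by simp
    qed
    show "\<forall>x\<in>A. \<exists>a\<in>A'. \<exists>b\<in>NA. x = a + b"
    proof
      fix x assume x: "x \<in> A"
      have "P x \<in> A'" by (rule PA[OF x])
      moreover have "x - P x \<in> NA"
      proof -
        have "x - P x \<in> A" using fvs.subspace_diff[OF sA x] A'A \<open>P x \<in> A'\<close> by blast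
        moreover have "P (x - P x) = 0" using Pl(2) PP \<open>P x \<in> A'\<close> by simp
        ultimately show ?thesis unfolding NA_def by blast
      qed
      moreover have "x = P x + (x - P x)" by simp
      ultimately show "\<exists>a\<in>A'. \<exists>b\<in>NA. x = a + b" by blast
    qed
    show "finite ?W" using fL by simp
  qed
  have dB: "fvs.dim BL = fvs.dim BL' + fvs.dim NB"
  proof (rule dim_direct[OF sBL' sNB BL'BL _ _ _ spanB])
    show "NB \<subseteq> BL" unfolding NB_def by blast
    show "BL' \<inter> NB \<subseteq> {0}"
    proof
      fix x assume x: "x \<in> BL' \<inter> NB"
      then have "P x = x" using BL'v Pid by blast
      then show "x \<in> {0}" using x NB_def by simp
    qed
    show "\<forall>x\<in>BL. \<exists>a\<in>BL'. \<exists>b\<in>NB. x = a + b"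
    proof
      fix x assume x: "x \<in> BL"
      have "P x \<in> BL'" by (rule PBL[OF x])
      moreover have "x - P x \<in> NB"
      proof -
        have "x - P x \<in> BL" using fvs.subspace_diff[OF sBL x] BL'BL \<open>P x \<in> BL'\<close> by blast
        moreover have "P (x - P x) = 0" using Pl(2) PP \<open>P x \<in> BL'\<close> by simp
        ultimately show ?thesis unfolding NB_def by blast
      qed
      moreover have "x = P x + (x - P x)" by simp
      ultimately show "\<exists>a\<in>BL'. \<exists>b\<in>NB. x = a + b" by blast
    qed
    show "finite ?W" using fL by simp
  qed
  have NAB: "NA = NB"
  proof
    show "NB \<subseteq> NA" using BLA unfolding NA_def NB_def by blast
    show "NA \<subseteq> NB"
    proof
      fix x assume x: "x \<in> NA"
      then have xA: "x \<in> A" and Px: "P x = 0" by (auto simp: NA_def)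
      obtain z y where zy: "z \<in> ZK" "y \<in> BL" "x = z + y" using xA A_def by blast
      obtain b where b: "b \<in> chains F L (Suc k)" "y = D V (Suc k) b" using zy(2) BL_def by blast
      have zc: "z \<in> chains F K k" using zy(1) ZK_def by blast
      have Hz: "H u v z \<in> chains F L (Suc k)"
        using chains_mono[OF KL] H_chains[OF gK uv zc] by blast
      have "x = x - P x" using Px by simp
      also have "\<dots> = (z - P z) + (y - P y)" using zy(3) Pl(1) by simp
      also have "\<dots> = D V (Suc k) (H u v z) + (D V (Suc k) b - D V (Suc k) (Q b))"
        using homot[OF zy(1)] b(2) PB by simp
      also have "\<dots> = D V (Suc k) (H u v z + (b - Q b))" by (simp add: D_add D_diff)
      finally have "x = D V (Suc k) (H u v z + (b - Q b))" .
      moreover have "H u v z + (b - Q b) \<in> chains F L (Suc k)"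
        using chains_add[OF Hz chains_diff[OF b(1)]] QL'[OF b(1)] chains_mono[OF L'L] by blast
      ultimately have "x \<in> BL" unfolding BL_def by blast
      then show "x \<in> NB" using Px NB_def by blast
    qed
  qed
  have "pers_betti F K L k = fvs.dim A' - fvs.dim BL'" using pb dA dB NAB by simp
  then show ?thesis using pb' by (simp add: K'_def L'_def)
qed


lemma filt_good:
  assumes fin: "finite V" and dom: "dominated V E u v" and fuv: "f v \<le> f u"
  shows "good V u v (filt V E f \<alpha> i)"
proof -
  have uV: "u \<in> V" "v \<in> V" "u \<noteq> v" and Nuv: "closed_nbhd E u \<subseteq> closed_nbhd E v"
    using dom unfolding dominated_def by auto
  have "u \<in> closed_nbhd E v" using Nuv unfolding closed_nbhd_def by blast
  then have vu: "{v, u} \<in> E" using uV unfolding closed_nbhd_def by blast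
  have nb: "x = v \<or> {v, x} \<in> E" if "{u, x} \<in> E" for x
  proof -
    have "x \<in> closed_nbhd E v" using Nuv that unfolding closed_nbhd_def by blast
    then show ?thesis unfolding closed_nbhd_def by blast
  qed
  let ?W = "sublevel V f (\<alpha> i)"
  let ?X = "filt V E f \<alpha> i"
  have X: "?X = clique_complex ?W E" by (simp add: filt_def)
  show ?thesis unfolding good_def
  proof (intro conjI ballI allI impI)
    fix s assume "s \<in> ?X"
    then show "finite s" "s \<subseteq> V" "s \<noteq> {}" unfolding X clique_complex_def sublevel_def by blast+
  next
    fix s t assume "s \<in> ?X" "t \<subseteq> s \<and> t \<noteq> {}"
    then show "t \<in> ?X" unfolding X clique_complex_def by (auto intro: finite_subset)
  next
    fix s assume s: "s \<in> ?X" and us: "u \<in> s"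
    have sW: "s \<noteq> {}" "finite s" "s \<subseteq> ?W" and pw: "\<forall>x\<in>s. \<forall>y\<in>s. x \<noteq> y \<longrightarrow> {x, y} \<in> E"
      using s unfolding X clique_complex_def by blast+
    have "f u \<le> \<alpha> i" using sW(3) us unfolding sublevel_def by blast
    then have vW: "v \<in> ?W" using uV fuv unfolding sublevel_def by simp
    have vx: "{v, x} \<in> E" if "x \<in> s" "x \<noteq> v" for x
    proof (cases "x = u")
      case True then show ?thesis using vu by simp
    next
      case False
      then have "u \<noteq> x" by simp
      then show ?thesis using nb that(2) pw[rule_format, OF us that(1)] by blast
    qed
    have "\<forall>x\<in>insert v s. \<forall>y\<in>insert v s. x \<noteq> y \<longrightarrow> {x, y} \<in> E"
    proof (intro ballI impI)
      fix x y assume xy: "x \<in> insert v s" "y \<in> insert v s" "x \<noteq> y"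
      show "{x, y} \<in> E"
      proof (cases "x = v")
        case True
        then show ?thesis using xy vx by auto
      next
        case False
        note xv = False
        show ?thesis
        proof (cases "y = v")
          case True
          then have "{v, x} \<in> E" using xy xv vx by auto
          then show ?thesis using True by (simp add: insert_commute)
        next
          case False
          then show ?thesis using xy xv pw by auto
        qed
      qed
    qed
    then show "insert v s \<in> ?X" unfolding X clique_complex_def using sW vW by auto
  qed
qed

lemma filt_del:
  "filt (del_vertex_V V u) (del_vertex_E E u) f \<alpha> i = {s \<in> filt V E f \<alpha> i. u \<notin> s}"
proof (rule set_eqI)
  fix s
  show "s \<in> filt (del_vertex_V V u) (del_vertex_E E u) f \<alpha> i \<longleftrightarrow> s \<in> {s \<in> filt V E f \<alpha> i. u \<notin> s}"
  proof
    assume "s \<in> filt (del_vertex_V V u) (del_vertex_E E u) f \<alpha> i"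
    then show "s \<in> {s \<in> filt V E f \<alpha> i. u \<notin> s}"
      unfolding filt_def clique_complex_def sublevel_def del_vertex_V_def del_vertex_E_def by blast
  next
    assume a: "s \<in> {s \<in> filt V E f \<alpha> i. u \<notin> s}"
    then have "\<forall>x\<in>s. \<forall>y\<in>s. x \<noteq> y \<longrightarrow> {x, y} \<in> E \<and> u \<notin> {x, y}"
      unfolding filt_def clique_complex_def by blast
    then show "s \<in> filt (del_vertex_V V u) (del_vertex_E E u) f \<alpha> i"
      using a unfolding filt_def clique_complex_def sublevel_def del_vertex_V_def del_vertex_E_def by blast
  qed
qed

lemma filt_mono: "\<alpha> i \<le> \<alpha> j \<Longrightarrow> filt V E f \<alpha> i \<subseteq> filt V E f \<alpha> j"
  unfolding filt_def clique_complex_def sublevel_def by force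

lemma alpha_mono:
  assumes "\<forall>i<m. (\<alpha>::nat\<Rightarrow>real) i < \<alpha> (Suc i)" "i \<le> j" "j \<le> m"
  shows "\<alpha> i \<le> \<alpha> j"
  using assms(2,3)
proof (induction j rule: dec_induct)
  case base then show ?case by simp
next
  case (step n)
  then have "\<alpha> n \<le> \<alpha> (Suc n)" using assms(1) by (simp add: less_imp_le)
  then show ?case using step by simp
qed

lemma betti_eq:
  fixes F :: "'k::field itself" and V :: "'a::linorder set"
  assumes fV: "finite V" and dom: "dominated V E u v" and fuv: "f v \<le> f u"
    and mono: "\<forall>i<m. \<alpha> i < \<alpha> (Suc i)" and j: "j \<le> m" and ij: "i \<le> int j"
  shows "betti_ij F V E f \<alpha> k i j = betti_ij F (del_vertex_V V u) (del_vertex_E E u) f \<alpha> k i j"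
proof (cases "i < 0")
  case True then show ?thesis by (simp add: betti_ij_def)
next
  case False
  have uV: "u \<in> V" "v \<in> V" "u \<noteq> v" using dom unfolding dominated_def by auto
  have le: "nat i \<le> j" using False ij by simp
  have KL: "filt V E f \<alpha> (nat i) \<subseteq> filt V E f \<alpha> j"
    by (rule filt_mono[OF alpha_mono[OF mono le j]])
  have "pers_betti F (filt V E f \<alpha> (nat i)) (filt V E f \<alpha> j) k =
        pers_betti F {s \<in> filt V E f \<alpha> (nat i). u \<notin> s} {s \<in> filt V E f \<alpha> j. u \<notin> s} k"
    by (rule main_lin[OF fV uV filt_good[OF fV dom fuv] filt_good[OF fV dom fuv] KL])
  then show ?thesis using False by (simp add: betti_ij_def filt_del)
qed

theorem theorem2:
  fixes V :: "'a::linorder set" and E :: "'a set set" and f :: "'a \<Rightarrow> real"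
    and \<alpha> :: "nat \<Rightarrow> real" and m :: nat and u v :: 'a and F :: "'k::field itself"
  assumes "simple_graph V E"
    and "V \<noteq> {}"
    and "\<forall>i<m. \<alpha> i < \<alpha> (Suc i)"
    and "\<alpha> 0 = Min (f ` V)" and "\<alpha> m = Max (f ` V)"
    and "dominated V E u v"
    and "f u \<ge> f v"
  shows "\<forall>k. PD F k V E f \<alpha> m = PD F k (del_vertex_V V u) (del_vertex_E E u) f \<alpha> m"
proof
  fix k
  have fV: "finite V" using assms(1) by (simp add: simple_graph_def)
  note be = betti_eq[OF fV assms(6) assms(7) assms(3), where F=F and k=k]
  have mf: "mult_fin F V E f \<alpha> k i j = mult_fin F (del_vertex_V V u) (del_vertex_E E u) f \<alpha> k i j"
    if "i \<in> {0..m}" "j \<in> {i<..m}" for i j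
  proof -
    have j: "j \<le> m" "j - 1 \<le> m" "int i \<le> int j" "int i \<le> int (j - 1)" "int i - 1 \<le> int j" "int i - 1 \<le> int (j - 1)"
      using that by auto
    show ?thesis unfolding mult_fin_def
      using be[OF j(1) j(3)] be[OF j(2) j(4)] be[OF j(1) j(5)] be[OF j(2) j(6)] by simp
  qed
  have mi: "mult_inf F V E f \<alpha> m k i = mult_inf F (del_vertex_V V u) (del_vertex_E E u) f \<alpha> m k i"
    if "i \<in> {0..m}" for i
  proof -
    have j: "m \<le> m" "int i \<le> int m" "int i - 1 \<le> int m" using that by auto
    show ?thesis unfolding mult_inf_def using be[OF j(1) j(2)] be[OF j(1) j(3)] by simp
  qed
  show "PD F k V E f \<alpha> m = PD F k (del_vertex_V V u) (del_vertex_E E u) f \<alpha> m"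
    unfolding PD_def
  proof (intro arg_cong2[where f="(+)"] sum.cong refl)
    fix i j assume "i \<in> {0..m}" "j \<in> {i<..m}"
    then show "replicate_mset (nat (mult_fin F V E f \<alpha> k i j)) (\<alpha> i, ereal (\<alpha> j)) =
      replicate_mset (nat (mult_fin F (del_vertex_V V u) (del_vertex_E E u) f \<alpha> k i j)) (\<alpha> i, ereal (\<alpha> j))"
      using mf by simp
  next
    fix i assume "i \<in> {0..m}"
    then show "replicate_mset (nat (mult_inf F V E f \<alpha> m k i)) (\<alpha> i, PInfty) =
      replicate_mset (nat (mult_inf F (del_vertex_V V u) (del_vertex_E E u) f \<alpha> m k i)) (\<alpha> i, PInfty)"
      using mi by simp
  qed
qed


end
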